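(* Let $P_n$ and $Q_n$ ($n\ge 0$) be the polynomials defined by $P_0(u)=u$, $P_{n+1}(u)=(1+u^2)P_n'(u)$ and $Q_0(u)=1$, $Q_{n+1}(u)=(1+u^2)Q_n'(u)+uQ_n(u)$, so that $\frac{d^n}{dx^n}\tan x=P_n(\tan x)$ and $\frac{d^n}{dx^n}\sec x=\sec x\,Q_n(\tan x)$. For $n\ge1$ let $$W_n(x)=\sum_{\pi\in S_n}x^{\mathrm{pk}(\pi)},\qquad W^{l}_n(x)=\sum_{\pi\in S_n}x^{\mathrm{lpk}(\pi)}.$$ Then for every $n\ge 1$ and every real $u>1$, $$W_n(u)=(u-1)^{\frac{n+1}{2}}u^{-1}P_n\big((u-1)^{-1/2}\big)\quad\text{and}\quad W^{l}_n(u)=(u-1)^{\frac n2}Q_n\big((u-1)^{-1/2}\big).$$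
   Context: $S_n$ is the symmetric group on $[n]=\{1,\dots,n\}$, permutations written $\pi=\pi(1)\cdots\pi(n)$. An interior peak of $\pi$ is an index $i\in\{2,\dots,n-1\}$ with $\pi(i-1)<\pi(i)>\pi(i+1)$; $\mathrm{pk}(\pi)$ is the number of interior peaks. A left peak of $\pi$ is an index $i\in[n-1]$ with $\pi(i-1)<\pi(i)>\pi(i+1)$, where $\pi(0):=0$; $\mathrm{lpk}(\pi)$ is the number of left peaks. Powers of $u-1>0$ denote positive real powers. *)

theory Defs
  imports "HOL-Analysis.Analysis" "HOL-Computational_Algebra.Polynomial"
begin

fun tanP :: "nat \<Rightarrow> real poly" where
  "tanP 0 = [:0, 1:]"
| "tanP (Suc n) = [:1, 0, 1:] * pderiv (tanP n)"

fun secQ :: "nat \<Rightarrow> real poly" where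
  "secQ 0 = [:1:]"
| "secQ (Suc n) = [:1, 0, 1:] * pderiv (secQ n) + [:0, 1:] * secQ n"

definition perms :: "nat \<Rightarrow> (nat \<Rightarrow> nat) set" where
  "perms n = {p. p permutes {1..n}}"

definition pk :: "nat \<Rightarrow> (nat \<Rightarrow> nat) \<Rightarrow> nat" where
  "pk n p = card {i \<in> {2..n-1}. p (i - 1) < p i \<and> p i > p (i + 1)}"

definition lpk :: "nat \<Rightarrow> (nat \<Rightarrow> nat) \<Rightarrow> nat" where
  "lpk n p = card {i \<in> {1..n-1}.
      (if i - 1 = 0 then 0 else p (i - 1)) < p i \<and> p i > p (i + 1)}"

definition W :: "nat \<Rightarrow> real \<Rightarrow> real" where
  "W n x = (\<Sum>p\<in>perms n. x ^ pk n p)"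

definition Wl :: "nat \<Rightarrow> real \<Rightarrow> real" where
  "Wl n x = (\<Sum>p\<in>perms n. x ^ lpk n p)"

end

theory Submission
  imports Defs
begin




definition ins :: "nat \<Rightarrow> (nat \<Rightarrow> nat) \<Rightarrow> nat \<Rightarrow> nat \<Rightarrow> nat" where
  "ins n q j = (\<lambda>i. if i < j then q i else if i = j then Suc n
                     else if i \<le> Suc n then q (i - 1) else i)"

lemma perm_val:
  fixes q :: "nat \<Rightarrow> nat"
  assumes "q permutes {1..n}" "i \<le> n"
  shows "q i \<le> n"
proof (cases "i = 0")
  case True
  then show ?thesis using permutes_not_in[OF assms(1), of 0] by simp
next
  case False
  then have "i \<in> {1..n}" using assms by auto
  then show ?thesis using permutes_in_image[OF assms(1)] by auto
qed

lemma perm_val1: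
  fixes q :: "nat \<Rightarrow> nat"
  assumes "q permutes {1..n}" "1 \<le> i" "i \<le> n"
  shows "1 \<le> q i"
  using permutes_in_image[OF assms(1), of i] assms by auto

lemma perm0: "(q::nat\<Rightarrow>nat) permutes {1..n} \<Longrightarrow> q 0 = 0"
  using permutes_not_in[of q "{1..n}" 0] by simp

lemma ins_ne:
  fixes q :: "nat \<Rightarrow> nat"
  assumes q: "q permutes {1..n}" and j: "j \<in> {1..Suc n}" and "i \<noteq> j"
  shows "ins n q j i \<noteq> Suc n"
proof -
  have a: "i \<le> n \<Longrightarrow> q i \<le> n" using perm_val[OF q, of i] by simp
  have b: "i \<le> Suc n \<Longrightarrow> q (i - 1) \<le> n" using perm_val[OF q, of "i - 1"] by simp
  show ?thesis using a b assms unfolding ins_def by auto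
qed

lemma ins_permutes:
  fixes q :: "nat \<Rightarrow> nat"
  assumes q: "q permutes {1..n}" and j: "j \<in> {1..Suc n}"
  shows "ins n q j permutes {1..Suc n}"
proof (rule bij_imp_permutes)
  show "ins n q j x = x" if "x \<notin> {1..Suc n}" for x
    using that j perm0[OF q] unfolding ins_def by (cases "x = 0") auto
  have inj: "inj q" using permutes_inj[OF q] .
  have injo: "inj_on (ins n q j) {1..Suc n}"
  proof (rule inj_onI)
    fix x y assume x: "x \<in> {1..Suc n}" and y: "y \<in> {1..Suc n}" and e: "ins n q j x = ins n q j y"
    show "x = y"
    proof (rule ccontr)
      assume ne: "x \<noteq> y"
      have "x \<noteq> j" using ins_ne[OF q j, of y] ne e by (metis ins_def less_irrefl)
      moreover have "y \<noteq> j" using ins_ne[OF q j, of x] ne e by (metis ins_def less_irrefl)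
      ultimately show False using e ne x y j inj_eq[OF inj] unfolding ins_def
        by (auto split: if_splits)
    qed
  qed
  have sub: "ins n q j ` {1..Suc n} \<subseteq> {1..Suc n}"
  proof
    fix y assume "y \<in> ins n q j ` {1..Suc n}"
    then obtain x where x: "x \<in> {1..Suc n}" and y: "y = ins n q j x" by auto
    have a: "x \<le> n \<Longrightarrow> q x \<le> n \<and> 1 \<le> q x" using perm_val[OF q, of x] perm_val1[OF q, of x] x by simp
    have b: "x > j \<Longrightarrow> q (x - 1) \<le> n \<and> 1 \<le> q (x - 1)" using perm_val[OF q, of "x - 1"] perm_val1[OF q, of "x - 1"] x j by simp
    show "y \<in> {1..Suc n}"
      using x y j a b
      unfolding ins_def by (auto split: if_splits)
  qed
  show "bij_betw (ins n q j) {1..Suc n} {1..Suc n}"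
    using endo_inj_surj[OF _ sub injo] injo by (simp add: bij_betw_def)
qed

lemma ins_inj:
  "inj_on (\<lambda>(q, j). ins n q j) (perms n \<times> {1..Suc n})"
proof (rule inj_onI, clarify)
  fix q j q' j'
  assume q: "q \<in> perms n" and j: "j \<in> {1..Suc n}" and q': "q' \<in> perms n"
    and j': "j' \<in> {1..Suc n}" and e: "ins n q j = ins n q' j'"
  have qp: "q permutes {1..n}" and qp': "q' permutes {1..n}" using q q' by (auto simp: perms_def)
  have "ins n q' j' j = ins n q j j" using e by simp
  also have "\<dots> = Suc n" by (simp add: ins_def)
  finally have "ins n q' j' j = Suc n" .
  then have jj: "j = j'" using ins_ne[OF qp' j', of j] by auto
  have "q i = q' i" for i
  proof -
    consider "i < j" | "j \<le> i" "i \<le> n" | "n < i" by linarith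
    then show ?thesis
    proof cases
      case 1 then show ?thesis using fun_cong[OF e, of i] jj by (simp add: ins_def)
    next
      case 2 then show ?thesis using fun_cong[OF e, of "Suc i"] jj by (simp add: ins_def)
    next
      case 3 then show ?thesis using permutes_not_in[OF qp, of i] permutes_not_in[OF qp', of i] by auto
    qed
  qed
  then show "q = q' \<and> j = j'" using jj by auto
qed

lemma perms_decomp:
  "(\<Sum>p\<in>perms (Suc n). f p) = (\<Sum>q\<in>perms n. \<Sum>j\<in>{1..Suc n}. f (ins n q j))"
proof -
  let ?g = "\<lambda>(q, j). ins n q j"
  have fin: "finite (perms n)" "finite (perms (Suc n))"
    by (auto simp: perms_def finite_permutations)
  have sub: "?g ` (perms n \<times> {1..Suc n}) \<subseteq> perms (Suc n)"
    using ins_permutes by (auto simp: perms_def)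
  have "card (?g ` (perms n \<times> {1..Suc n})) = card (perms n \<times> {1..Suc n})"
    using card_image[OF ins_inj] .
  also have "\<dots> = fact n * Suc n"
    using card_permutations[of "{1..n}" n] by (simp add: perms_def card_cartesian_product)
  also have "\<dots> = card (perms (Suc n))"
    using card_permutations[of "{1..Suc n}" "Suc n"] by (simp add: perms_def)
  finally have eq: "?g ` (perms n \<times> {1..Suc n}) = perms (Suc n)"
    using card_subset_eq[OF fin(2) sub] by simp
  have "(\<Sum>q\<in>perms n. \<Sum>j\<in>{1..Suc n}. f (ins n q j)) = (\<Sum>(q,j)\<in>perms n \<times> {1..Suc n}. f (ins n q j))"
    by (rule sum.cartesian_product)
  also have "\<dots> = (\<Sum>p\<in>?g ` (perms n \<times> {1..Suc n}). f p)"
    using sum.reindex[OF ins_inj, of f] by (simp add: comp_def case_prod_unfold)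
  finally show ?thesis using eq by simp
qed



definition PkS :: "nat \<Rightarrow> nat \<Rightarrow> (nat \<Rightarrow> nat) \<Rightarrow> nat set" where
  "PkS a n q = {i \<in> {a..n-1}. q (i - 1) < q i \<and> q (i + 1) < q i}"

definition sh :: "nat \<Rightarrow> nat \<Rightarrow> nat" where
  "sh j i = (if i < j then i else Suc i)"

lemma PkS_ins:
  fixes q :: "nat \<Rightarrow> nat"
  assumes q: "q permutes {1..n}" and j: "j \<in> {1..Suc n}" and a: "1 \<le> a" "a \<le> 2"
  shows "PkS a (Suc n) (ins n q j) =
    sh j ` (PkS a n q - {j - 1, j}) \<union> (if a \<le> j \<and> j \<le> n then {j} else {})"
    (is "?L = ?R")
proof (rule set_eqI, rule iffI)
  fix i assume i: "i \<in> ?L"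
  then have ia: "a \<le> i" "i \<le> n" and p1: "ins n q j (i - 1) < ins n q j i"
     and p2: "ins n q j (i + 1) < ins n q j i" by (auto simp: PkS_def)
  consider "i < j" | "i = j" | "j < i" by linarith
  then show "i \<in> ?R"
  proof cases
    case 1
    have "i + 1 \<noteq> j"
    proof
      assume "i + 1 = j"
      then have "ins n q j (i+1) = Suc n" by (simp add: ins_def)
      moreover have "ins n q j i \<le> n" using 1 perm_val[OF q, of i] ia by (simp add: ins_def)
      ultimately show False using p2 by simp
    qed
    then have "i + 1 < j" using 1 by simp
    then have lt: "i + 1 < j" .
    have "ins n q j (i - 1) = q (i - 1)" "ins n q j i = q i" "ins n q j (i+1) = q (i + 1)"
      using lt by (auto simp: ins_def)
    then have "i \<in> PkS a n q - {j - 1, j}" using p1 p2 ia lt j by (auto simp: PkS_def)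
    moreover have "sh j i = i" using 1 by (simp add: sh_def)
    ultimately show ?thesis by (metis UnI1 image_eqI)
  next
    case 2 then show ?thesis using ia by auto
  next
    case 3
    have "i - 1 \<noteq> j"
    proof
      assume e: "i - 1 = j"
      then have "ins n q j (i-1) = Suc n" by (simp add: ins_def)
      moreover have "ins n q j i \<le> n" using 3 perm_val[OF q, of "i - 1"] ia by (simp add: ins_def)
      ultimately show False using p1 by simp
    qed
    then have lt: "j < i - 1" using 3 by simp
    have "ins n q j (i - 1) = q (i - 1 - 1)" "ins n q j i = q (i - 1)" "ins n q j (i+1) = q i"
      using lt ia by (auto simp: ins_def)
    then have "i - 1 \<in> PkS a n q - {j - 1, j}" using p1 p2 ia lt a j
      by (auto simp: PkS_def)
    moreover have "sh j (i - 1) = i" using lt by (simp add: sh_def)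
    ultimately show ?thesis by (metis UnI1 image_eqI)
  qed
next
  fix i assume i: "i \<in> ?R"
  show "i \<in> ?L"
  proof (cases "i = j \<and> a \<le> j \<and> j \<le> n")
    case True
    have "ins n q j (i - 1) \<le> n"
      using True perm_val[OF q, of "i - 1"] j by (auto simp: ins_def)
    moreover have "ins n q j (i + 1) \<le> n"
      using True perm_val[OF q, of i] by (auto simp: ins_def)
    moreover have "ins n q j i = Suc n" using True by (simp add: ins_def)
    ultimately show ?thesis using True by (auto simp: PkS_def)
  next
    case False
    then obtain k where k: "k \<in> PkS a n q" "k \<noteq> j - 1" "k \<noteq> j" and ik: "i = sh j k"
      using i by (auto split: if_splits)
    have ka: "a \<le> k" "k \<le> n - 1" and k1: "q (k - 1) < q k" and k2: "q (k + 1) < q k"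
      using k by (auto simp: PkS_def)
    consider "k < j" | "j < k" using k by linarith
    then show ?thesis
    proof cases
      case 1
      then have "k + 1 < j" using k by simp
      then show ?thesis using ik ka k1 k2 1 a by (auto simp: PkS_def sh_def ins_def)
    next
      case 2
      have "ins n q j (Suc k - 1) = q (k - 1)" "ins n q j (Suc k) = q k" "ins n q j (Suc k + 1) = q (k+1)"
        using 2 ka a by (auto simp: ins_def)
      moreover have "i = Suc k" using ik 2 by (simp add: sh_def)
      ultimately show ?thesis using ka k1 k2 2 a by (auto simp: PkS_def)
    qed
  qed
qed

lemma PkS_ins_card:
  fixes q :: "nat \<Rightarrow> nat"
  assumes q: "q permutes {1..n}" and j: "j \<in> {1..Suc n}" and a: "1 \<le> a" "a \<le> 2"
  shows "card (PkS a (Suc n) (ins n q j)) =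
    card (PkS a n q - {j - 1, j}) + (if a \<le> j \<and> j \<le> n then 1 else 0)"
proof -
  have inj: "inj (sh j)" by (rule injI) (auto simp: sh_def split: if_splits)
  have fin: "finite (PkS a n q - {j - 1, j})" by (auto simp: PkS_def)
  have nj: "j \<notin> sh j ` (PkS a n q - {j - 1, j})" by (auto simp: sh_def)
  have "card (sh j ` (PkS a n q - {j - 1, j})) = card (PkS a n q - {j - 1, j})"
    using card_image[OF inj_on_subset[OF inj]] by blast
  then show ?thesis unfolding PkS_ins[OF q j a] using nj fin by auto
qed



lemma count_slots:
  fixes T :: "nat \<Rightarrow> 'b::comm_ring_1"
  assumes K: "K \<subseteq> {a..n-1}" and nc: "\<And>i. i \<in> K \<Longrightarrow> Suc i \<notin> K"
    and a: "1 \<le> a" "a \<le> 2" and n: "1 \<le> n"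
  shows "(\<Sum>j\<in>{1..Suc n}. T (card (K - {j-1, j}) + (if a \<le> j \<and> j \<le> n then 1 else 0)))
     = of_nat (2 * card K + a) * T (card K) + of_nat (Suc n - a - 2 * card K) * T (Suc (card K))
   \<and> 2 * card K + a \<le> Suc n"
proof -
  define k where "k = card K"
  define Adj where "Adj = K \<union> Suc ` K"
  define B where "B = {a..n} - Adj"
  define C where "C = {1..Suc n} - {a..n}"
  have finK: "finite K" using K finite_subset by blast
  have Kb: "\<And>x. x \<in> K \<Longrightarrow> a \<le> x \<and> x \<le> n - 1" using K by auto
  have AdjS: "Adj \<subseteq> {a..n}" using Kb n by (fastforce simp: Adj_def)
  have finA: "finite Adj" using finK by (simp add: Adj_def)
  have disj: "K \<inter> Suc ` K = {}" using nc by auto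
  have cA: "card Adj = 2 * k"
    unfolding Adj_def k_def using card_Un_disjoint[OF finK _ disj] finK
    by (simp add: card_image)
  have cAle: "card Adj \<le> Suc n - a" using card_mono[OF _ AdjS] by simp
  have cB: "card B = Suc n - a - 2 * k"
    unfolding B_def using card_Diff_subset[OF finA AdjS] cA by simp
  have cC: "card C = a"
    unfolding C_def using card_Diff_subset[of "{a..n}" "{1..Suc n}"] a n by auto
  have U: "{1..Suc n} = Adj \<union> B \<union> C" using AdjS a by (auto simp: B_def C_def)
  have d1: "Adj \<inter> B = {}" "(Adj \<union> B) \<inter> C = {}" by (auto simp: B_def C_def dest: subsetD[OF AdjS])
  let ?f = "\<lambda>j. T (card (K - {j-1, j}) + (if a \<le> j \<and> j \<le> n then 1 else 0))"
  have vA: "?f j = T k" if j: "j \<in> Adj" for j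
  proof -
    have ja: "a \<le> j" "j \<le> n" using j AdjS by auto
    have kpos: "k \<ge> 1" using j finK by (auto simp: Adj_def k_def card_gt_0_iff Suc_le_eq)
    have "card (K - {j-1, j}) = k - 1"
    proof (cases "j \<in> K")
      case True
      have "Suc (j - 1) = j" using ja a by simp
      then have "j - 1 \<notin> K" using nc[of "j - 1"] True by auto
      then have "K - {j-1, j} = K - {j}" by auto
      then show ?thesis using True finK by (simp add: k_def)
    next
      case False
      then obtain i where i: "i \<in> K" "j = Suc i" using j by (auto simp: Adj_def)
      then have "K - {j-1, j} = K - {i}" using False by auto
      then show ?thesis using i finK by (simp add: k_def)
    qed
    then show ?thesis using ja kpos by simp
  qed
  have vB: "?f j = T (Suc k)" if j: "j \<in> B" for j
  proof -
    have ja: "a \<le> j" "j \<le> n" "j \<notin> Adj" using j by (auto simp: B_def)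
    have j1: "j \<notin> K" using ja(3) by (simp add: Adj_def)
    have j2: "j - 1 \<notin> K"
    proof
      assume "j - 1 \<in> K"
      then have "Suc (j - 1) \<in> Adj" by (simp add: Adj_def)
      moreover have "Suc (j - 1) = j" using ja a by simp
      ultimately show False using ja by simp
    qed
    have "K - {j-1, j} = K" using j1 j2 by auto
    then show ?thesis using ja by (simp add: k_def)
  qed
  have vC: "?f j = T k" if j: "j \<in> C" for j
  proof -
    have ja: "\<not> (a \<le> j \<and> j \<le> n)" "j \<ge> 1" using j by (auto simp: C_def)
    have j1: "j \<notin> K" using ja Kb by force
    have j2: "j - 1 \<notin> K"
    proof
      assume "j - 1 \<in> K"
      then have "Suc (j - 1) \<in> Adj" by (simp add: Adj_def)
      moreover have "Suc (j - 1) = j" using ja by simp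
      ultimately show False using ja AdjS by auto
    qed
    have "K - {j-1, j} = K" using j1 j2 by auto
    moreover have "(if a \<le> j \<and> j \<le> n then 1 else 0) = (0::nat)" using ja by simp
    ultimately show ?thesis by (simp add: k_def)
  qed
  have finB: "finite B" "finite C" by (auto simp: B_def C_def)
  have "(\<Sum>j\<in>{1..Suc n}. ?f j) = (\<Sum>j\<in>Adj. ?f j) + (\<Sum>j\<in>B. ?f j) + (\<Sum>j\<in>C. ?f j)"
    unfolding U using d1 finA finB by (simp add: sum.union_disjoint)
  also have "\<dots> = of_nat (card Adj) * T k + of_nat (card B) * T (Suc k) + of_nat (card C) * T k"
    using vA vB vC by simp
  also have "\<dots> = of_nat (2 * k + a) * T k + of_nat (Suc n - a - 2 * k) * T (Suc k)"
    using cA cB cC by (simp add: algebra_simps)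
  finally have eq: "(\<Sum>j\<in>{1..Suc n}. ?f j) = of_nat (2 * k + a) * T k + of_nat (Suc n - a - 2 * k) * T (Suc k)" .
  have "2 * k + a \<le> Suc n" using cA cAle a n by linarith
  then show ?thesis using eq unfolding k_def by blast
qed

lemma PkS_props:
  "PkS a n q \<subseteq> {a..n-1}" "i \<in> PkS a n q \<Longrightarrow> Suc i \<notin> PkS a n q"
  by (auto simp: PkS_def)

lemma rec_sum:
  fixes T :: "nat \<Rightarrow> 'b::comm_ring_1"
  assumes a: "1 \<le> a" "a \<le> 2" and n: "1 \<le> n"
  shows "(\<Sum>p\<in>perms (Suc n). T (card (PkS a (Suc n) p))) =
    (\<Sum>q\<in>perms n. of_nat (2 * card (PkS a n q) + a) * T (card (PkS a n q))
       + of_nat (Suc n - a - 2 * card (PkS a n q)) * T (Suc (card (PkS a n q))))"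
  unfolding perms_decomp
proof (rule sum.cong[OF refl])
  fix q assume q: "q \<in> perms n"
  then have qp: "q permutes {1..n}" by (simp add: perms_def)
  have "(\<Sum>j\<in>{1..Suc n}. T (card (PkS a (Suc n) (ins n q j)))) =
     (\<Sum>j\<in>{1..Suc n}. T (card (PkS a n q - {j-1, j}) + (if a \<le> j \<and> j \<le> n then 1 else 0)))"
    by (rule sum.cong[OF refl]) (simp add: PkS_ins_card[OF qp _ a])
  also have "\<dots> = of_nat (2 * card (PkS a n q) + a) * T (card (PkS a n q))
       + of_nat (Suc n - a - 2 * card (PkS a n q)) * T (Suc (card (PkS a n q)))"
    using conjunct1[OF count_slots[OF PkS_props(1) PkS_props(2) a n]] .
  finally show "(\<Sum>j\<in>{1..Suc n}. T (card (PkS a (Suc n) (ins n q j)))) =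
    of_nat (2 * card (PkS a n q) + a) * T (card (PkS a n q))
       + of_nat (Suc n - a - 2 * card (PkS a n q)) * T (Suc (card (PkS a n q)))" .
qed

lemma PkS_bound: "1 \<le> a \<Longrightarrow> a \<le> 2 \<Longrightarrow> 1 \<le> n \<Longrightarrow> 2 * card (PkS a n q) + a \<le> Suc n"
  using conjunct2[OF count_slots[OF PkS_props(1) PkS_props(2), where T = "\<lambda>_. 0::int"]] by blast



lemma aux1: "(a::real) \<noteq> 0 \<Longrightarrow> b \<noteq> 0 \<Longrightarrow> w \<noteq> 0 \<Longrightarrow> a * b * inverse w * (w * w^k / b * (1/a)) = w^k"
  by (simp add: field_simps)
lemma aux2: "(a::real) \<noteq> 0 \<Longrightarrow> b \<noteq> 0 \<Longrightarrow> a * b * (w^k / b * (1/a)) = w^k"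
  by (simp add: field_simps)

lemma fin1:
  fixes s :: real and m k :: nat
  assumes s: "s > 0"
  shows "s ^ (m + 2*k + 2) * inverse (s^2 + 1) * ((1 + (inverse s)^2) ^ Suc k * (inverse s) ^ m) = (s^2+1)^k"
proof -
  have e: "1 + (inverse s)^2 = (s^2+1) / s^2" using s by (simp add: field_simps)
  have "s^2 \<ge> 0" by simp
  then have p: "s^2 + 1 \<noteq> 0" by linarith
  have 1: "s ^ (m + 2*k + 2) = s^m * (s^2)^(Suc k)"
  proof -
    have "m + 2*k + 2 = m + 2 * Suc k" by simp
    then show ?thesis by (simp only: power_add power_mult)
  qed
  have 2: "(1 + (inverse s)^2) ^ Suc k = (s^2+1) * (s^2+1)^k / (s^2)^(Suc k)" unfolding e power_divide by simp
  have 3: "inverse s ^ m = 1 / s^m" by (simp add: power_inverse divide_inverse)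
  show ?thesis unfolding 1 2 3 by (rule aux1) (use s p in auto)
qed

lemma fin2:
  fixes s :: real and m k :: nat
  assumes s: "s > 0"
  shows "s ^ (m + 2*k) * ((1 + (inverse s)^2) ^ k * (inverse s) ^ m) = (s^2+1)^k"
proof -
  have e: "1 + (inverse s)^2 = (s^2+1) / s^2" using s by (simp add: field_simps)
  have 1: "s ^ (m + 2*k) = s^m * (s^2)^k" by (simp add: power_add power_mult[symmetric] mult.commute)
  have 2: "(1 + (inverse s)^2) ^ k = (s^2+1)^k / (s^2)^k" unfolding e power_divide by simp
  have 3: "inverse s ^ m = 1 / s^m" by (simp add: power_inverse divide_inverse)
  show ?thesis unfolding 1 2 3 by (rule aux2) (use s in auto)
qed

lemma dlem_gen:
  fixes A X :: "real poly" and r m :: nat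
  assumes dA: "pderiv A = smult 2 X" and dX: "pderiv X = 1"
  shows "A * pderiv (A^r * X^m) =
    smult (of_nat (2*r)) (A^r * X^(Suc m)) + smult (of_nat m) (A^(Suc r) * X^(m-1))"
proof -
  have t1: "A * (X ^ m * pderiv (A ^ r)) = smult (of_nat (2*r)) (A^r * X^(Suc m))"
  proof (cases r)
    case 0 then show ?thesis by simp
  next
    case (Suc r')
    have "A * (X ^ m * pderiv (A ^ r)) = A * (X ^ m * smult (of_nat r) (A^r' * smult 2 X))"
      unfolding pderiv_power dA using Suc by simp
    also have "\<dots> = smult (of_nat r * 2) (A * A^r' * (X^m * X))"
      by (simp add: mult_ac)
    finally have "A * (X ^ m * pderiv (A ^ r)) = smult (of_nat r * 2) (A * A^r' * (X^m * X))" .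
    then show ?thesis using Suc by (simp add: mult_ac)
  qed
  have t2: "A * (A^r * pderiv (X ^ m)) = smult (of_nat m) (A^(Suc r) * X^(m-1))"
    by (simp add: pderiv_power dX mult_ac)
  show ?thesis unfolding pderiv_mult distrib_left t1 t2 by (rule add.commute)
qed

lemma dlem:
  fixes r m :: nat
  shows "[:1,0,1:] * pderiv ([:1,0,1:]^r * [:0,1:]^m :: real poly) =
    smult (of_nat (2*r)) ([:1,0,1:]^r * [:0,1:]^(Suc m)) + smult (of_nat m) ([:1,0,1:]^(Suc r) * [:0,1:]^(m-1))"
  by (rule dlem_gen) (simp_all add: pderiv_pCons)

lemma pderiv_sum': "pderiv (sum f A) = (\<Sum>x\<in>A. pderiv (f x))"
  using higher_pderiv_sum[of 1 f A] by simp


definition Fp :: "nat \<Rightarrow> real poly" where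
  "Fp n = (\<Sum>q\<in>perms n. [:1,0,1:] ^ Suc (card (PkS 2 n q)) * [:0,1:] ^ (n - 1 - 2 * card (PkS 2 n q)))"

definition Gp :: "nat \<Rightarrow> real poly" where
  "Gp n = (\<Sum>q\<in>perms n. [:1,0,1:] ^ (card (PkS 1 n q)) * [:0,1:] ^ (n - 2 * card (PkS 1 n q)))"

lemma perms1: "perms (Suc 0) = {id}"
  by (simp add: perms_def permutes_sing)

lemma tan_term:
  fixes k m n :: nat and A X :: "real poly"
  assumes "n = m + 2*k + 1"
  shows "smult (of_nat (2 * Suc k)) (A ^ Suc k * X ^ Suc (n - 1 - 2*k))
       + smult (of_nat (n - 1 - 2*k)) (A ^ Suc (Suc k) * X ^ (n - 1 - 2*k - 1))
     = of_nat (2*k + 2) * (A ^ Suc k * X ^ (Suc n - 1 - 2*k))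
       + of_nat (Suc n - 2 - 2*k) * (A ^ Suc (Suc k) * X ^ (Suc n - 1 - 2 * Suc k))"
proof -
  have "Suc (n - 1 - 2*k) = Suc n - 1 - 2*k" "n - 1 - 2*k - 1 = Suc n - 1 - 2 * Suc k"
    "2 * Suc k = 2*k+2" "n - 1 - 2*k = Suc n - 2 - 2*k" using assms by auto
  then show ?thesis unfolding of_nat_mult_conv_smult by simp
qed
lemma tan_eq: "1 \<le> n \<Longrightarrow> tanP n = Fp n"
proof (induction n rule: dec_induct)
  case base
  show ?case by (simp add: Fp_def perms1 PkS_def pderiv_pCons)
next
  case (step n)
  define c where "c = (\<lambda>q. card (PkS 2 n q))"
  define T where "T = (\<lambda>l. [:1,0,1:] ^ Suc l * [:0,1:] ^ (Suc n - 1 - 2 * l) :: real poly)"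
  have "tanP (Suc n) = [:1,0,1:] * pderiv (Fp n)" using step.IH by simp
  also have "\<dots> = (\<Sum>q\<in>perms n. [:1,0,1:] * pderiv ([:1,0,1:] ^ Suc (c q) * [:0,1:] ^ (n - 1 - 2 * c q)))"
    by (simp add: Fp_def pderiv_sum' sum_distrib_left c_def)
  also have "\<dots> = (\<Sum>q\<in>perms n. smult (of_nat (2 * Suc (c q))) ([:1,0,1:] ^ Suc (c q) * [:0,1:] ^ Suc (n - 1 - 2 * c q))
       + smult (of_nat (n - 1 - 2 * c q)) ([:1,0,1:] ^ Suc (Suc (c q)) * [:0,1:] ^ (n - 1 - 2 * c q - 1)))"
    by (simp only: dlem)
  also have "\<dots> = (\<Sum>q\<in>perms n. of_nat (2 * c q + 2) * T (c q) + of_nat (Suc n - 2 - 2 * c q) * T (Suc (c q)))"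
  proof (rule sum.cong[OF refl])
    fix q
    have "2 * c q + 2 \<le> Suc n" using PkS_bound[of 2 n q] step.hyps by (simp add: c_def)
    then obtain m where "n = m + 2 * c q + 1" by (metis add.commute add_Suc_right le_Suc_ex one_add_one plus_1_eq_Suc Suc_eq_plus1 add_Suc add.assoc Suc_le_mono add_2_eq_Suc' le_add_diff_inverse)
    then show "smult (of_nat (2 * Suc (c q))) ([:1,0,1:] ^ Suc (c q) * [:0,1:] ^ Suc (n - 1 - 2 * c q))
       + smult (of_nat (n - 1 - 2 * c q)) ([:1,0,1:] ^ Suc (Suc (c q)) * [:0,1:] ^ (n - 1 - 2 * c q - 1))
      = of_nat (2 * c q + 2) * T (c q) + of_nat (Suc n - 2 - 2 * c q) * T (Suc (c q))"
      unfolding T_def by (rule tan_term)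
  qed
  also have "\<dots> = (\<Sum>p\<in>perms (Suc n). T (card (PkS 2 (Suc n) p)))"
    using rec_sum[of 2 n T] step.hyps by (simp add: c_def)
  also have "\<dots> = Fp (Suc n)" by (simp add: Fp_def T_def)
  finally show ?case .
qed

lemma sec_term:
  fixes k m n :: nat and A X :: "real poly"
  assumes "n = m + 2*k"
  shows "smult (of_nat (2 * k)) (A ^ k * X ^ Suc (n - 2*k))
       + smult (of_nat (n - 2*k)) (A ^ Suc k * X ^ (n - 2*k - 1))
       + X * (A ^ k * X ^ (n - 2*k))
     = of_nat (2*k + 1) * (A ^ k * X ^ (Suc n - 2*k))
       + of_nat (Suc n - 1 - 2*k) * (A ^ Suc k * X ^ (Suc n - 2 * Suc k))"
proof -
  have e: "Suc n - 2*k = Suc (n - 2*k)" "Suc n - 2 * Suc k = n - 2*k - 1"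
    "Suc n - 1 - 2*k = n - 2*k" using assms by auto
  show ?thesis unfolding of_nat_mult_conv_smult e power_Suc
    by (simp add: smult_add_left algebra_simps)
qed

lemma sec_eq: "1 \<le> n \<Longrightarrow> secQ n = Gp n"
proof (induction n rule: dec_induct)
  case base
  show ?case by (simp add: Gp_def perms1 PkS_def pderiv_pCons)
next
  case (step n)
  define c where "c = (\<lambda>q. card (PkS 1 n q))"
  define T where "T = (\<lambda>l. [:1,0,1:] ^ l * [:0,1:] ^ (Suc n - 2 * l) :: real poly)"
  have "secQ (Suc n) = [:1,0,1:] * pderiv (Gp n) + [:0,1:] * Gp n" using step.IH by simp
  also have "\<dots> = (\<Sum>q\<in>perms n. [:1,0,1:] * pderiv ([:1,0,1:] ^ (c q) * [:0,1:] ^ (n - 2 * c q))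
        + [:0,1:] * ([:1,0,1:] ^ (c q) * [:0,1:] ^ (n - 2 * c q)))"
    by (simp add: Gp_def pderiv_sum' sum_distrib_left c_def sum.distrib)
  also have "\<dots> = (\<Sum>q\<in>perms n. smult (of_nat (2 * c q)) ([:1,0,1:] ^ (c q) * [:0,1:] ^ Suc (n - 2 * c q))
       + smult (of_nat (n - 2 * c q)) ([:1,0,1:] ^ Suc (c q) * [:0,1:] ^ (n - 2 * c q - 1))
       + [:0,1:] * ([:1,0,1:] ^ (c q) * [:0,1:] ^ (n - 2 * c q)))"
    by (simp only: dlem)
  also have "\<dots> = (\<Sum>q\<in>perms n. of_nat (2 * c q + 1) * T (c q) + of_nat (Suc n - 1 - 2 * c q) * T (Suc (c q)))"
  proof (rule sum.cong[OF refl])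
    fix q
    have "2 * c q + 1 \<le> Suc n" using PkS_bound[of 1 n q] step.hyps by (simp add: c_def)
    then obtain m where "n = m + 2 * c q" using le_Suc_ex by (metis add.commute add_le_cancel_left Suc_eq_plus1 le_add_diff_inverse2)
    then show "smult (of_nat (2 * c q)) ([:1,0,1:] ^ (c q) * [:0,1:] ^ Suc (n - 2 * c q))
       + smult (of_nat (n - 2 * c q)) ([:1,0,1:] ^ Suc (c q) * [:0,1:] ^ (n - 2 * c q - 1))
       + [:0,1:] * ([:1,0,1:] ^ (c q) * [:0,1:] ^ (n - 2 * c q))
      = of_nat (2 * c q + 1) * T (c q) + of_nat (Suc n - 1 - 2 * c q) * T (Suc (c q))"
      unfolding T_def by (rule sec_term)
  qed
  also have "\<dots> = (\<Sum>p\<in>perms (Suc n). T (card (PkS 1 (Suc n) p)))"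
    using rec_sum[of 1 n T] step.hyps by (simp add: c_def)
  also have "\<dots> = Gp (Suc n)" by (simp add: Gp_def T_def)
  finally show ?case .
qed


lemma pk_eq: "pk n q = card (PkS 2 n q)"
  by (simp add: pk_def PkS_def)

lemma lpk_eq:
  fixes q :: "nat \<Rightarrow> nat"
  assumes "q permutes {1..n}"
  shows "lpk n q = card (PkS 1 n q)"
  unfolding lpk_def PkS_def
  by (rule arg_cong[where f=card], rule Collect_cong) (use perm0[OF assms] in auto)

lemma polyA: "poly [:1,0,1:] (x::real) = 1 + x^2"
  by (simp add: power2_eq_square)

lemma polyX: "poly [:0,1:] (x::real) = x"
  by simp

theorem mainTheorem2:
  fixes n :: nat and u :: real
  assumes "n \<ge> 1" and "u > 1"
  shows "W n u = (u - 1) powr ((real n + 1) / 2) * inverse u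
                 * poly (tanP n) ((u - 1) powr (-1/2))
       \<and> Wl n u = (u - 1) powr (real n / 2) * poly (secQ n) ((u - 1) powr (-1/2))"
proof -
  define s where "s = sqrt (u - 1)"
  have c: "u - 1 > 0" using assms by simp
  have s: "s > 0" using c by (simp add: s_def)
  have s2: "s^2 = u - 1" using c by (simp add: s_def)
  have u: "u = s^2 + 1" using s2 by simp
  have t: "(u - 1) powr (-1/2) = inverse s"
  proof -
    have "(u - 1) powr (-1/2) = (u - 1) powr (- (1/2))" by simp
    also have "\<dots> = inverse s" unfolding powr_minus using c by (simp add: powr_half_sqrt s_def)
    finally show ?thesis .
  qed
  have pw: "(u - 1) powr (real N / 2) = s ^ N" for N :: nat
  proof -
    have "(u - 1) powr (real N / 2) = ((u - 1) powr (1/2)) powr (real N)"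
      by (simp add: powr_powr)
    also have "\<dots> = s powr real N" using c by (simp add: powr_half_sqrt s_def)
    also have "\<dots> = s ^ N" using s by (simp add: powr_realpow)
    finally show ?thesis .
  qed
  have pw1: "(u - 1) powr ((real n + 1) / 2) = s ^ Suc n"
    using pw[of "Suc n"] by (simp add: add.commute)
  have part1: "W n u = (u - 1) powr ((real n + 1) / 2) * inverse u
                 * poly (tanP n) ((u - 1) powr (-1/2))"
  proof -
    have "(u - 1) powr ((real n + 1) / 2) * inverse u * poly (tanP n) ((u - 1) powr (-1/2))
      = (\<Sum>q\<in>perms n. s ^ Suc n * inverse u *
          ((1 + (inverse s)^2) ^ Suc (card (PkS 2 n q)) * (inverse s) ^ (n - 1 - 2 * card (PkS 2 n q))))"
      unfolding tan_eq[OF assms(1)] Fp_def pw1 t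
      by (simp only: poly_sum sum_distrib_left poly_mult poly_power polyA polyX)
    also have "\<dots> = (\<Sum>q\<in>perms n. u ^ card (PkS 2 n q))"
    proof (rule sum.cong[OF refl])
      fix q
      define k where "k = card (PkS 2 n q)"
      have "2 * k + 2 \<le> Suc n" using PkS_bound[of 2 n q] assms(1) by (simp add: k_def)
      then obtain m where m: "n = m + 2 * k + 1"
        by (metis add.commute add_Suc_right le_Suc_ex one_add_one plus_1_eq_Suc Suc_eq_plus1 add_Suc add.assoc Suc_le_mono add_2_eq_Suc' le_add_diff_inverse)
      have "Suc n = m + 2 * k + 2" "n - 1 - 2 * k = m" using m by auto
      then show "s ^ Suc n * inverse u *
          ((1 + (inverse s)^2) ^ Suc (card (PkS 2 n q)) * (inverse s) ^ (n - 1 - 2 * card (PkS 2 n q)))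
          = u ^ card (PkS 2 n q)"
        unfolding k_def[symmetric] using fin1[OF s, of m k] u by simp
    qed
    also have "\<dots> = W n u" by (simp add: W_def pk_eq)
    finally show ?thesis by simp
  qed
  have part2: "Wl n u = (u - 1) powr (real n / 2) * poly (secQ n) ((u - 1) powr (-1/2))"
  proof -
    have "(u - 1) powr (real n / 2) * poly (secQ n) ((u - 1) powr (-1/2))
      = (\<Sum>q\<in>perms n. s ^ n *
          ((1 + (inverse s)^2) ^ (card (PkS 1 n q)) * (inverse s) ^ (n - 2 * card (PkS 1 n q))))"
      unfolding sec_eq[OF assms(1)] Gp_def pw t
      by (simp only: poly_sum sum_distrib_left poly_mult poly_power polyA polyX)
    also have "\<dots> = (\<Sum>q\<in>perms n. u ^ card (PkS 1 n q))"
    proof (rule sum.cong[OF refl])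
      fix q
      define k where "k = card (PkS 1 n q)"
      have "2 * k + 1 \<le> Suc n" using PkS_bound[of 1 n q] assms(1) by (simp add: k_def)
      then obtain m where m: "n = m + 2 * k"
        by (metis add.commute add_le_cancel_left Suc_eq_plus1 le_add_diff_inverse2)
      have "n - 2 * k = m" using m by auto
      then show "s ^ n *
          ((1 + (inverse s)^2) ^ (card (PkS 1 n q)) * (inverse s) ^ (n - 2 * card (PkS 1 n q)))
          = u ^ card (PkS 1 n q)"
        unfolding k_def[symmetric] using fin2[OF s, of m k] u m by simp
    qed
    also have "\<dots> = Wl n u" by (auto simp: Wl_def perms_def lpk_eq intro: sum.cong)
    finally show ?thesis by simp
  qed
  show ?thesis using part1 part2 by blast
qed

end
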